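(* Let $F$, $R$, $e$, $f$, $\mathcal{D}^R$, $\Pi_R$ be as in the context. For every Lipschitz function $a$ on $R$, $$\frac{p^{1/e}-1}{2p^{1/e}\sqrt{p^f}}\,L_1(a)\ \le\ L_{\mathcal{D}^R}(a)\ \le\ \sqrt{\frac{p^f-1}{p^f}}\,L_1(a),$$ where $L_1(a)=\sup_{x\ne y\in R}\frac{|a(x)-a(y)|}{|x-y|}$ and $L_{\mathcal{D}^R}(a)=\|[\mathcal{D}^R,\Pi_R(a)]\|$.
   Context: Let $p$ be a prime, $F$ a finite extension of $\mathbb{Q}_p$ with absolute value $|\cdot|$ extending the $p$-adic one, $R=\{|x|\le1\}$, $\pi$ a uniformizer with $|\pi|=p^{-1/e}$, residue field of size $p^f$, $S=\{s_0=0,\dots,s_{p^f-1}\}\subset R$ representatives of $R/(\pi)$ containing $0$. For $n\ge0$, $X_n^R=\{\sum_{k=0}^{n-1}x_k\pi^k: x_k\in S\}$. $H^R$ is the Hilbert space of $\phi=(\phi_n)_{n\ge0}$, $\phi_n:X_n^R\to\mathbb{C}$, with $\|\phi\|^2=\sum_n\sum_{x\in X_n^R}|\phi_n(x)|^2p^{-nf}<\infty$. $(D\phi)_n(x)=p^{n/e}\big(\phi_n(x)-p^{-f}\sum_{s\in S}\phi_{n+1}(x+s\pi^n)\big)$, and $D^R$ is $D$ on its maximal domain in $H^R$. For $a\in C(R)$, $(\rho_R(a)\phi)_n(x)=a(x)\phi_n(x)$. Set $\mathcal{H}^R=H^R\oplus H^R$, $\Pi_R=\rho_R\oplus\rho_R$,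 $\mathcal{D}^R=\begin{pmatrix}0&D^R\\(D^R)^*&0\end{pmatrix}$. The norm of an unbounded commutator is taken to be $+\infty$. *)

theory Defs
  imports "HOL-Analysis.Analysis" "HOL-Computational_Algebra.Primes"
begin

definition padic_abs_rat :: "nat \<Rightarrow> rat \<Rightarrow> real" where
  "padic_abs_rat p q =
     (let (a, b) = quotient_of q in
      if a = 0 then 0
      else real p powr (- (real (multiplicity (int p) a) - real (multiplicity (int p) b))))"

definition Qp_in :: "('a::field_char_0 \<Rightarrow> real) \<Rightarrow> 'a set" where
  "Qp_in av = {x. \<exists>r :: nat \<Rightarrow> rat. (\<lambda>n. av (of_rat (r n) - x)) \<longlonglongrightarrow> 0}"

definition padic_extension :: "nat \<Rightarrow> ('a::field_char_0 \<Rightarrow> real) \<Rightarrow> bool" where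
  "padic_extension p av \<longleftrightarrow>
     (\<forall>x. av x \<ge> 0) \<and> (\<forall>x. av x = 0 \<longleftrightarrow> x = 0) \<and>
     (\<forall>x y. av (x * y) = av x * av y) \<and>
     (\<forall>x y. av (x + y) \<le> max (av x) (av y)) \<and>
     (\<forall>q. av (of_rat q) = padic_abs_rat p q) \<and>
     \<comment> \<open>completeness\<close>
     (\<forall>u :: nat \<Rightarrow> 'a. (\<forall>\<epsilon>>0. \<exists>N. \<forall>m\<ge>N. \<forall>n\<ge>N. av (u m - u n) < \<epsilon>)
         \<longrightarrow> (\<exists>l. (\<lambda>n. av (u n - l)) \<longlonglongrightarrow> 0)) \<and>
     \<comment> \<open>finite-dimensional over Q_p\<close>
     (\<exists>B. finite B \<and> (\<forall>x. \<exists>c. (\<forall>b\<in>B. c b \<in> Qp_in av) \<and> x = (\<Sum>b\<in>B. c b * b)))"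

definition int_ring :: "('a \<Rightarrow> real) \<Rightarrow> 'a set" where
  "int_ring av = {x. av x \<le> 1}"

text \<open>pi is a uniformizer with |pi| = p^(-1/e); S is a set of representatives of R/(pi)
  containing 0, of cardinality p^f (the size of the residue field).\<close>
definition local_data ::
  "nat \<Rightarrow> ('a::field_char_0 \<Rightarrow> real) \<Rightarrow> nat \<Rightarrow> nat \<Rightarrow> 'a \<Rightarrow> 'a set \<Rightarrow> bool" where
  "local_data p av e f \<pi> S \<longleftrightarrow>
     e > 0 \<and> f > 0 \<and>
     \<pi> \<noteq> 0 \<and> av \<pi> < 1 \<and> (\<forall>x. av x < 1 \<longrightarrow> av x \<le> av \<pi>) \<and>
     av \<pi> = real p powr (- 1 / real e) \<and>
     finite S \<and> card S = p ^ f \<and> 0 \<in> S \<and> S \<subseteq> int_ring av \<and>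
     (\<forall>x\<in>int_ring av. \<exists>!s\<in>S. av (x - s) < 1)"

definition Xn :: "'a::field \<Rightarrow> 'a set \<Rightarrow> nat \<Rightarrow> 'a set" where
  "Xn \<pi> S n = {y. \<exists>x::nat \<Rightarrow> 'a. (\<forall>k<n. x k \<in> S) \<and> y = (\<Sum>k<n. x k * \<pi> ^ k)}"

type_synonym 'a vec = "nat \<Rightarrow> 'a \<Rightarrow> complex"

definition inH :: "nat \<Rightarrow> nat \<Rightarrow> 'a::field \<Rightarrow> 'a set \<Rightarrow> 'a vec \<Rightarrow> bool" where
  "inH p f \<pi> S \<phi> \<longleftrightarrow>
     (\<forall>n x. x \<notin> Xn \<pi> S n \<longrightarrow> \<phi> n x = 0) \<and>
     summable (\<lambda>n. (\<Sum>x\<in>Xn \<pi> S n. (cmod (\<phi> n x))\<^sup>2) * real p powr (- real (n * f)))"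

definition hnorm :: "nat \<Rightarrow> nat \<Rightarrow> 'a::field \<Rightarrow> 'a set \<Rightarrow> 'a vec \<Rightarrow> real" where
  "hnorm p f \<pi> S \<phi> =
     sqrt (\<Sum>n. (\<Sum>x\<in>Xn \<pi> S n. (cmod (\<phi> n x))\<^sup>2) * real p powr (- real (n * f)))"

definition hinner :: "nat \<Rightarrow> nat \<Rightarrow> 'a::field \<Rightarrow> 'a set \<Rightarrow> 'a vec \<Rightarrow> 'a vec \<Rightarrow> complex" where
  "hinner p f \<pi> S \<phi> \<psi> =
     (\<Sum>n. (\<Sum>x\<in>Xn \<pi> S n. \<phi> n x * cnj (\<psi> n x)) * complex_of_real (real p powr (- real (n * f))))"

definition Dop :: "nat \<Rightarrow> nat \<Rightarrow> nat \<Rightarrow> 'a::field \<Rightarrow> 'a set \<Rightarrow> 'a vec \<Rightarrow> 'a vec" where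
  "Dop p e f \<pi> S \<phi> = (\<lambda>n x. if x \<in> Xn \<pi> S n then
      complex_of_real (real p powr (real n / real e)) *
        (\<phi> n x - complex_of_real (real p powr (- real f)) * (\<Sum>s\<in>S. \<phi> (Suc n) (x + s * \<pi> ^ n)))
      else 0)"

definition domD :: "nat \<Rightarrow> nat \<Rightarrow> nat \<Rightarrow> 'a::field \<Rightarrow> 'a set \<Rightarrow> 'a vec set" where
  "domD p e f \<pi> S = {\<phi>. inH p f \<pi> S \<phi> \<and> inH p f \<pi> S (Dop p e f \<pi> S \<phi>)}"

definition is_adj_val :: "nat \<Rightarrow> nat \<Rightarrow> nat \<Rightarrow> 'a::field \<Rightarrow> 'a set \<Rightarrow> 'a vec \<Rightarrow> 'a vec \<Rightarrow> bool" where
  "is_adj_val p e f \<pi> S \<psi> \<eta> \<longleftrightarrow> inH p f \<pi> S \<eta> \<and>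
     (\<forall>\<phi>\<in>domD p e f \<pi> S. hinner p f \<pi> S (Dop p e f \<pi> S \<phi>) \<psi> = hinner p f \<pi> S \<phi> \<eta>)"

definition domDstar :: "nat \<Rightarrow> nat \<Rightarrow> nat \<Rightarrow> 'a::field \<Rightarrow> 'a set \<Rightarrow> 'a vec set" where
  "domDstar p e f \<pi> S = {\<psi>. inH p f \<pi> S \<psi> \<and> (\<exists>\<eta>. is_adj_val p e f \<pi> S \<psi> \<eta>)}"

definition Dstar :: "nat \<Rightarrow> nat \<Rightarrow> nat \<Rightarrow> 'a::field \<Rightarrow> 'a set \<Rightarrow> 'a vec \<Rightarrow> 'a vec" where
  "Dstar p e f \<pi> S \<psi> = (THE \<eta>. is_adj_val p e f \<pi> S \<psi> \<eta>)"

definition rho :: "('a \<Rightarrow> complex) \<Rightarrow> 'a vec \<Rightarrow> 'a vec" where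
  "rho a \<phi> = (\<lambda>n x. a x * \<phi> n x)"

definition vdiff :: "'a vec \<Rightarrow> 'a vec \<Rightarrow> 'a vec" where
  "vdiff \<phi> \<psi> = (\<lambda>n x. \<phi> n x - \<psi> n x)"

text \<open>L_{D^R}(a) = norm of the commutator [calD, Pi_R(a)] on H \<oplus> H, as an extended real
  (+infinity if unbounded). Here calD(phi1,phi2) = (D phi2, D^* phi1), so the commutator
  applied to (phi1,phi2) is (D(a phi2) - a D phi2, D^*(a phi1) - a D^* phi1); its natural
  domain is {xi in dom calD. Pi(a) xi in dom calD}.\<close>
definition L_D :: "nat \<Rightarrow> nat \<Rightarrow> nat \<Rightarrow> 'a::field \<Rightarrow> 'a set \<Rightarrow> ('a \<Rightarrow> complex) \<Rightarrow> ereal" where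
  "L_D p e f \<pi> S a = Sup {ereal (
        sqrt ((hnorm p f \<pi> S (vdiff (Dop p e f \<pi> S (rho a \<phi>2)) (rho a (Dop p e f \<pi> S \<phi>2))))\<^sup>2
            + (hnorm p f \<pi> S (vdiff (Dstar p e f \<pi> S (rho a \<phi>1)) (rho a (Dstar p e f \<pi> S \<phi>1))))\<^sup>2)
        / sqrt ((hnorm p f \<pi> S \<phi>1)\<^sup>2 + (hnorm p f \<pi> S \<phi>2)\<^sup>2)) | \<phi>1 \<phi>2.
      \<phi>1 \<in> domDstar p e f \<pi> S \<and> \<phi>2 \<in> domD p e f \<pi> S \<and>
      rho a \<phi>1 \<in> domDstar p e f \<pi> S \<and> rho a \<phi>2 \<in> domD p e f \<pi> S \<and>
      (hnorm p f \<pi> S \<phi>1)\<^sup>2 + (hnorm p f \<pi> S \<phi>2)\<^sup>2 > 0}"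

definition lipschitz_on_R :: "('a::ab_group_add \<Rightarrow> real) \<Rightarrow> ('a \<Rightarrow> complex) \<Rightarrow> bool" where
  "lipschitz_on_R av a \<longleftrightarrow>
     (\<exists>K. \<forall>x\<in>int_ring av. \<forall>y\<in>int_ring av. cmod (a x - a y) \<le> K * av (x - y))"

definition L1 :: "('a::ab_group_add \<Rightarrow> real) \<Rightarrow> ('a \<Rightarrow> complex) \<Rightarrow> real" where
  "L1 av a = Sup {cmod (a x - a y) / av (x - y) | x y. x \<in> int_ring av \<and> y \<in> int_ring av \<and> x \<noteq> y}"

end

theory Submission
  imports Defs
begin

locale padic =
  fixes p e f :: nat and av :: "'a::field_char_0 \<Rightarrow> real" and \<pi> :: 'a and S :: "'a set"
  assumes prime: "prime p" and ext: "padic_extension p av" and loc: "local_data p av e f \<pi> S"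
begin

abbreviation "R \<equiv> int_ring av"
abbreviation "q \<equiv> av \<pi>"

lemmas extc = ext[unfolded padic_extension_def]
lemma av_nonneg: "av x \<ge> 0" using conjunct1[OF extc] by (rule spec)
lemma av_zero: "av x = 0 \<longleftrightarrow> x = 0" using conjunct1[OF conjunct2[OF extc]] by (rule spec)
lemma av_mult: "av (x * y) = av x * av y" using conjunct1[OF conjunct2[OF conjunct2[OF extc]]] by blast
lemma av_ultra: "av (x + y) \<le> max (av x) (av y)" using conjunct1[OF conjunct2[OF conjunct2[OF conjunct2[OF extc]]]] by blast

lemma av0[simp]: "av 0 = 0" by (simp add: av_zero)

lemma av_one: "av 1 = 1"
proof -
  have "av 1 = av 1 * av 1" using av_mult[of 1 1] by simp
  moreover have "av 1 \<noteq> 0" using av_zero by simp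
  ultimately show ?thesis by (metis mult_cancel_left1)
qed

lemma av_m1: "av (-1) = 1"
proof -
  have "av (-1) * av (-1) = 1" using av_mult[of "-1" "-1"] av_one by simp
  then have "(av (-1) - 1) * (av (-1) + 1) = 0" by (simp add: algebra_simps)
  then show ?thesis using av_nonneg[of "-1"] by auto
qed

lemma av_uminus: "av (- x) = av x"
  using av_mult[of "-1" x] av_m1 by simp

lemma av_diff: "av (x - y) \<le> max (av x) (av y)"
  using av_ultra[of x "-y"] av_uminus[of y] by simp

lemma av_comm: "av (x - y) = av (y - x)"
  using av_uminus[of "x - y"] by simp

lemma av_power: "av (x ^ n) = av x ^ n"
  by (induction n) (auto simp: av_one av_mult)

lemma av_divide: "av (x / y) = av x / av y"
proof (cases "y = 0")
  case True
  have "av 0 = 0" using av_zero by simp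
  then show ?thesis using True by simp
next
  case False
  have "av x = av y * av (x / y)" using av_mult[of y "x/y"] False by simp
  then show ?thesis using False av_zero by (simp add: field_simps)
qed

lemmas locc = loc[unfolded local_data_def]
lemma e_pos: "e > 0" using locc by blast
lemma f_pos: "f > 0" using locc by blast
lemma pi_nz: "\<pi> \<noteq> 0" using locc by blast
lemma q_lt1: "q < 1" using locc by blast
lemma small: "av x < 1 \<Longrightarrow> av x \<le> q" using locc by blast
lemma q_def: "q = real p powr (- 1 / real e)" using locc by blast
lemma S_fin: "finite S" using locc by blast
lemma S_card: "card S = p ^ f" using locc by blast
lemma S0: "0 \<in> S" using locc by blast
lemma SR: "S \<subseteq> R" using locc by blast
lemma S_rep: "x \<in> R \<Longrightarrow> \<exists>!s\<in>S. av (x - s) < 1" using locc by blast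

lemma q_pos: "q > 0"
proof -
  have "q \<noteq> 0" using pi_nz av_zero by simp
  then show ?thesis using av_nonneg[of \<pi>] by linarith
qed

lemma p_ge2: "p \<ge> 2" using prime by (simp add: prime_ge_2_nat)

lemma R_iff: "x \<in> R \<longleftrightarrow> av x \<le> 1" by (simp add: int_ring_def)

lemma R_add: "x \<in> R \<Longrightarrow> y \<in> R \<Longrightarrow> x + y \<in> R"
  using av_ultra[of x y] by (auto simp: R_iff)
lemma R_diff: "x \<in> R \<Longrightarrow> y \<in> R \<Longrightarrow> x - y \<in> R"
  using av_diff[of x y] by (auto simp: R_iff)
lemma R_mult: "x \<in> R \<Longrightarrow> y \<in> R \<Longrightarrow> x * y \<in> R"
  by (simp add: R_iff av_mult mult_le_one av_nonneg)
lemma pi_R: "\<pi> \<in> R" using q_lt1 by (simp add: R_iff)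
lemma pow_R: "\<pi> ^ n \<in> R"
  using q_lt1 by (simp add: R_iff av_power power_le_one av_nonneg)

lemma S_eq: "s \<in> S \<Longrightarrow> s' \<in> S \<Longrightarrow> av (s - s') < 1 \<Longrightarrow> s = s'"
proof -
  assume a: "s \<in> S" "s' \<in> S" "av (s - s') < 1"
  have "s \<in> R" using a SR by auto
  from S_rep[OF this] obtain t where "t \<in> S" "\<forall>u\<in>S. av (s - u) < 1 \<longrightarrow> u = t" by blast
  moreover have "av (s - s) < 1" by simp
  ultimately show ?thesis using a by blast
qed

lemma S_unit: "s \<in> S \<Longrightarrow> s \<noteq> 0 \<Longrightarrow> av s = 1"
proof -
  assume a: "s \<in> S" "s \<noteq> 0"
  have "av s \<le> 1" using a SR by (auto simp: R_iff)
  moreover have "\<not> av s < 1" using S_eq[of s 0] a S0 by auto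
  ultimately show ?thesis by simp
qed

lemma S_diff_le: "s \<in> S \<Longrightarrow> s' \<in> S \<Longrightarrow> av (s - s') \<le> 1"
proof -
  assume "s \<in> S" "s' \<in> S"
  then have "s - s' \<in> R" using R_diff SR by blast
  then show ?thesis by (simp add: R_iff)
qed


abbreviation "X n \<equiv> Xn \<pi> S n"

lemma X0: "X 0 = {0}"
  unfolding Xn_def by auto

lemma XSuc: "X (Suc n) = (\<lambda>(u,s). u + s * \<pi> ^ n) ` (X n \<times> S)"
proof
  show "X (Suc n) \<subseteq> (\<lambda>(u,s). u + s * \<pi> ^ n) ` (X n \<times> S)"
  proof
    fix y assume "y \<in> X (Suc n)"
    then obtain x where x: "\<forall>k<Suc n. x k \<in> S" "y = (\<Sum>k<Suc n. x k * \<pi> ^ k)"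
      unfolding Xn_def by blast
    have u: "(\<Sum>k<n. x k * \<pi> ^ k) \<in> X n" using x(1) unfolding Xn_def by (auto intro!: exI[of _ x])
    have "y = (\<Sum>k<n. x k * \<pi> ^ k) + x n * \<pi> ^ n" using x(2) by simp
    moreover have "x n \<in> S" using x(1) by simp
    ultimately show "y \<in> (\<lambda>(u,s). u + s * \<pi> ^ n) ` (X n \<times> S)" using u by force
  qed
next
  show "(\<lambda>(u,s). u + s * \<pi> ^ n) ` (X n \<times> S) \<subseteq> X (Suc n)"
  proof
    fix y assume "y \<in> (\<lambda>(u,s). u + s * \<pi> ^ n) ` (X n \<times> S)"
    then obtain u s where us: "u \<in> X n" "s \<in> S" "y = u + s * \<pi> ^ n" by auto
    then obtain x where x: "\<forall>k<n. x k \<in> S" "u = (\<Sum>k<n. x k * \<pi> ^ k)"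
      unfolding Xn_def by blast
    define x' where "x' = x(n := s)"
    have "(\<Sum>k<n. x' k * \<pi> ^ k) = (\<Sum>k<n. x k * \<pi> ^ k)"
      by (rule sum.cong) (auto simp: x'_def)
    then have "y = (\<Sum>k<Suc n. x' k * \<pi> ^ k)" using us x by (simp add: x'_def)
    moreover have "\<forall>k<Suc n. x' k \<in> S" using x us by (auto simp: x'_def less_Suc_eq)
    ultimately show "y \<in> X (Suc n)" unfolding Xn_def by blast
  qed
qed

lemma XSuc_E: "y \<in> X (Suc n) \<Longrightarrow> \<exists>u s. u \<in> X n \<and> s \<in> S \<and> y = u + s * \<pi> ^ n"
  unfolding XSuc by auto
lemma XSuc_I: "u \<in> X n \<Longrightarrow> s \<in> S \<Longrightarrow> u + s * \<pi> ^ n \<in> X (Suc n)"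
  unfolding XSuc by auto

lemma X_finite: "finite (X n)"
  by (induction n) (auto simp: X0 XSuc S_fin)

lemma X_R: "X n \<subseteq> R"
proof (induction n)
  case 0 then show ?case by (simp add: X0 R_iff)
next
  case (Suc n)
  show ?case
  proof
    fix y assume "y \<in> X (Suc n)"
    then obtain u s where "u \<in> X n" "s \<in> S" "y = u + s * \<pi> ^ n" using XSuc_E by blast
    then show "y \<in> R" using Suc SR R_add R_mult pow_R by blast
  qed
qed

lemma X_key: "u \<in> X n \<Longrightarrow> v \<in> X n \<Longrightarrow> av (u - v) \<le> q ^ n \<Longrightarrow> u = v"
proof (induction n arbitrary: u v)
  case 0 then show ?case by (simp add: X0)
next
  case (Suc n)
  obtain u0 s where u: "u0 \<in> X n" "s \<in> S" "u = u0 + s * \<pi> ^ n" using Suc.prems(1) XSuc_E by blast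
  obtain v0 t where v: "v0 \<in> X n" "t \<in> S" "v = v0 + t * \<pi> ^ n" using Suc.prems(2) XSuc_E by blast
  have qn: "q ^ Suc n \<le> q ^ n" using q_lt1 q_pos by (simp add: power_decreasing)
  have st: "av ((s - t) * \<pi> ^ n) \<le> q ^ n"
    using S_diff_le[OF u(2) v(2)] q_pos by (simp add: av_mult av_power mult_left_le_one_le)
  have "u0 - v0 = (u - v) + (- ((s - t) * \<pi> ^ n))" using u v by (simp add: algebra_simps)
  then have "av (u0 - v0) \<le> max (av (u - v)) (av ((s - t) * \<pi> ^ n))"
    using av_ultra av_uminus by metis
  then have "av (u0 - v0) \<le> q ^ n" using st qn Suc.prems(3) by linarith
  then have eq: "u0 = v0" using Suc.IH u v by blast
  then have "u - v = (s - t) * \<pi> ^ n" using u v by (simp add: algebra_simps)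
  then have "av (s - t) * q ^ n \<le> q * q ^ n" using Suc.prems(3) by (simp add: av_mult av_power)
  then have "av (s - t) \<le> q" using q_pos by simp
  then have "s = t" using S_eq u(2) v(2) q_lt1 by fastforce
  then show ?case using eq u v by simp
qed

lemma X_inj: "u \<in> X n \<Longrightarrow> u' \<in> X n \<Longrightarrow> s \<in> S \<Longrightarrow> s' \<in> S \<Longrightarrow>
   u + s * \<pi> ^ n = u' + s' * \<pi> ^ n \<Longrightarrow> u = u' \<and> s = s'"
proof -
  assume a: "u \<in> X n" "u' \<in> X n" "s \<in> S" "s' \<in> S" "u + s * \<pi> ^ n = u' + s' * \<pi> ^ n"
  then have "u - u' = (s' - s) * \<pi> ^ n" by (simp add: algebra_simps)
  then have "av (u - u') \<le> q ^ n"
    using S_diff_le[OF a(4) a(3)] q_pos by (simp add: av_mult av_power mult_left_le_one_le)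
  then have "u = u'" using X_key a by blast
  then show ?thesis using a pi_nz by simp
qed

lemma X_sum: "(\<Sum>u\<in>X n. \<Sum>s\<in>S. g (u + s * \<pi> ^ n)) = (\<Sum>y\<in>X (Suc n). g y)"
proof -
  have inj: "inj_on (\<lambda>(u,s). u + s * \<pi> ^ n) (X n \<times> S)"
    by (auto simp: inj_on_def dest: X_inj)
  have "(\<Sum>y\<in>X (Suc n). g y) = (\<Sum>z\<in>X n \<times> S. g ((\<lambda>(u,s). u + s * \<pi> ^ n) z))"
    unfolding XSuc by (rule sum.reindex[OF inj, unfolded comp_def])
  also have "\<dots> = (\<Sum>u\<in>X n. \<Sum>s\<in>S. g (u + s * \<pi> ^ n))"
    by (simp add: sum.cartesian_product split_def)
  finally show ?thesis by simp
qed

lemma X_approx: "x \<in> R \<Longrightarrow> \<exists>y\<in>X N. av (x - y) \<le> q ^ N"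
proof (induction N)
  case 0 then show ?case by (simp add: X0 R_iff)
next
  case (Suc N)
  then obtain y where y: "y \<in> X N" "av (x - y) \<le> q ^ N" by blast
  define z where "z = (x - y) / \<pi> ^ N"
  have "av z \<le> 1" using y(2) q_pos by (simp add: z_def av_divide av_power divide_le_eq)
  then have "z \<in> R" by (simp add: R_iff)
  then obtain s where s: "s \<in> S" "av (z - s) < 1" using S_rep by blast
  have zs: "av (z - s) \<le> q" using small s(2) by blast
  have zz: "z * \<pi> ^ N = x - y" using pi_nz by (simp add: z_def)
  have "x - (y + s * \<pi> ^ N) = (z - s) * \<pi> ^ N" using zz by (simp add: algebra_simps)
  then have "av (x - (y + s * \<pi> ^ N)) \<le> q * q ^ N"
    using zs q_pos by (simp add: av_mult av_power mult_right_mono)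
  moreover have "y + s * \<pi> ^ N \<in> X (Suc N)" using y s XSuc_I by blast
  ultimately show ?case by auto
qed

lemma av_exact: "z \<noteq> 0 \<Longrightarrow> av z \<le> 1 \<Longrightarrow> \<exists>m. av z = q ^ m"
proof -
  assume z: "z \<noteq> 0" "av z \<le> 1"
  have zp: "av z > 0" using z av_zero av_nonneg by (metis less_eq_real_def)
  obtain N where N: "q ^ N < av z" using real_arch_pow_inv[OF zp q_lt1] by blast
  define A where "A = {k. av z \<le> q ^ k}"
  have "A \<subseteq> {..<N}"
  proof
    fix k assume "k \<in> A"
    then have "av z \<le> q ^ k" by (simp add: A_def)
    then have "q ^ N < q ^ k" using N by linarith
    then show "k \<in> {..<N}" using q_pos q_lt1 by (simp add: power_strict_decreasing_iff)
  qed
  then have finA: "finite A" by (rule finite_subset) simp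
  have "0 \<in> A" using z by (simp add: A_def)
  define m where "m = Max A"
  have mA: "m \<in> A" using finA \<open>0 \<in> A\<close> m_def by (metis Max_in empty_iff)
  have "Suc m \<notin> A" using finA m_def by (metis Max_ge Suc_n_not_le_n)
  then have lt: "q ^ Suc m < av z" by (simp add: A_def)
  have le: "av z \<le> q ^ m" using mA by (simp add: A_def)
  define w where "w = z / \<pi> ^ m"
  have aw: "av w = av z / q ^ m" by (simp add: w_def av_divide av_power)
  have "av w \<le> 1" using aw le q_pos by (simp add: divide_le_eq)
  moreover have "\<not> av w < 1"
  proof
    assume "av w < 1"
    then have "av w \<le> q" using small by blast
    then have "av z \<le> q * q ^ m" using aw q_pos by (simp add: divide_le_eq mult.commute)
    then show False using lt by simp
  qed
  ultimately have "av w = 1" by simp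
  then have "av z = q ^ m" using aw q_pos by simp
  then show ?thesis by blast
qed


abbreviation "P \<equiv> real p ^ f"
abbreviation "w n \<equiv> real p powr (- real (n * f))"
abbreviation "T \<phi> n \<equiv> (\<Sum>x\<in>X n. (cmod (\<phi> n x))\<^sup>2) * w n"
abbreviation "cc n \<equiv> real p powr (real n / real e)"
abbreviation "dd \<equiv> real p powr (- real f)"

lemma p_pos: "real p > 0" using p_ge2 by simp
lemma P_gt1: "P > 1" using p_ge2 f_pos by simp
lemma w_pos: "w n > 0" using p_pos by simp
lemma dd_eq: "dd = 1 / P" using p_pos by (simp add: powr_minus powr_realpow divide_inverse)
lemma w_Suc': "w (Suc n) = dd * w n"
  by (simp add: powr_add[symmetric] algebra_simps)
lemma w_Suc: "w n = P * w (Suc n)"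
  unfolding w_Suc' dd_eq using P_gt1 by simp
lemma cc_q: "cc n * q ^ n = 1"
proof -
  have qn: "q ^ n = real p powr (- (real n / real e))" using p_pos by (simp add: q_def powr_power)
  have "cc n * q ^ n = real p powr (real n / real e + - (real n / real e))"
    unfolding qn powr_add by simp
  also have "\<dots> = 1" using p_pos by simp
  finally show ?thesis .
qed
lemma cc_pos: "cc n > 0" using p_pos by simp

definition comm :: "('a \<Rightarrow> complex) \<Rightarrow> 'a vec \<Rightarrow> 'a vec" where
  "comm b \<phi> = vdiff (Dop p e f \<pi> S (rho b \<phi>)) (rho b (Dop p e f \<pi> S \<phi>))"

lemma comm_in: "x \<in> X n \<Longrightarrow> comm b \<phi> n x = complex_of_real (cc n) * complex_of_real dd *
    (\<Sum>s\<in>S. (b x - b (x + s * \<pi> ^ n)) * \<phi> (Suc n) (x + s * \<pi> ^ n))"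
  by (simp add: comm_def vdiff_def Dop_def rho_def algebra_simps sum_distrib_left sum_subtractf)

lemma comm_out: "x \<notin> X n \<Longrightarrow> comm b \<phi> n x = 0"
  by (simp add: comm_def vdiff_def Dop_def rho_def)

lemma S_av2: "(\<Sum>s\<in>S. (av s)\<^sup>2) = P - 1"
proof -
  have "(\<Sum>s\<in>S. (av s)\<^sup>2) = (\<Sum>s\<in>S - {0}. (av s)\<^sup>2)"
    using S_fin S0 by (simp add: sum.remove)
  also have "\<dots> = (\<Sum>s\<in>S - {0}. 1)" using S_unit by (intro sum.cong) auto
  also have "\<dots> = real (card S) - 1"
  proof -
    have "card S \<ge> 1" using S_fin S0 card_gt_0_iff by (metis One_nat_def Suc_leI empty_iff)
    then show ?thesis using S_fin S0 by (simp add: of_nat_diff)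
  qed
  finally show ?thesis by (simp add: S_card)
qed

lemma level_bound:
  assumes L0: "L \<ge> 0" and Lb: "\<And>u v. u \<in> R \<Longrightarrow> v \<in> R \<Longrightarrow> cmod (b u - b v) \<le> L * av (u - v)"
  shows "T (comm b \<phi>) n \<le> L\<^sup>2 * ((P - 1) / P) * T \<phi> (Suc n)"
proof -
  have pt: "(cmod (comm b \<phi> n x))\<^sup>2 \<le> (L / P)\<^sup>2 * (P - 1) * (\<Sum>s\<in>S. (cmod (\<phi> (Suc n) (x + s * \<pi> ^ n)))\<^sup>2)"
    if x: "x \<in> X n" for x
  proof -
    let ?c = "\<lambda>s. cmod (\<phi> (Suc n) (x + s * \<pi> ^ n))"
    have xR: "x \<in> R" using x X_R by blast
    have tb: "cmod ((b x - b (x + s * \<pi> ^ n)) * \<phi> (Suc n) (x + s * \<pi> ^ n)) \<le> L * q ^ n * (av s * ?c s)"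
      if s: "s \<in> S" for s
    proof -
      have yR: "x + s * \<pi> ^ n \<in> R" using XSuc_I[OF x s] X_R by blast
      have "cmod (b x - b (x + s * \<pi> ^ n)) \<le> L * av (x - (x + s * \<pi> ^ n))" using Lb xR yR by blast
      also have "av (x - (x + s * \<pi> ^ n)) = av s * q ^ n"
        by (simp add: av_uminus av_mult av_power)
      finally have "cmod (b x - b (x + s * \<pi> ^ n)) \<le> L * (av s * q ^ n)" .
      then have "cmod (b x - b (x + s * \<pi> ^ n)) * ?c s \<le> L * (av s * q ^ n) * ?c s"
        by (rule mult_right_mono) simp
      then show ?thesis by (simp only: norm_mult) (simp add: mult_ac)
    qed
    have "cmod (comm b \<phi> n x) = cc n * dd * cmod (\<Sum>s\<in>S. (b x - b (x + s * \<pi> ^ n)) * \<phi> (Suc n) (x + s * \<pi> ^ n))"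
      using x cc_pos p_pos by (simp add: comm_in norm_mult)
    also have "\<dots> \<le> cc n * dd * (\<Sum>s\<in>S. L * q ^ n * (av s * ?c s))"
      using cc_pos p_pos tb by (intro mult_left_mono order_trans[OF norm_sum] sum_mono) auto
    also have "\<dots> = (cc n * q ^ n) * (L * dd) * (\<Sum>s\<in>S. av s * ?c s)"
      by (simp add: sum_distrib_left algebra_simps)
    also have "\<dots> = (L / P) * (\<Sum>s\<in>S. av s * ?c s)" by (simp add: cc_q dd_eq)
    finally have le1: "cmod (comm b \<phi> n x) \<le> (L / P) * (\<Sum>s\<in>S. av s * ?c s)" .
    have "(cmod (comm b \<phi> n x))\<^sup>2 \<le> ((L / P) * (\<Sum>s\<in>S. av s * ?c s))\<^sup>2"
      using le1 by (intro power_mono) auto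
    also have "\<dots> = (L / P)\<^sup>2 * (\<Sum>s\<in>S. av s * ?c s)\<^sup>2" by (simp only: power_mult_distrib)
    also have "\<dots> \<le> (L / P)\<^sup>2 * ((\<Sum>s\<in>S. (av s)\<^sup>2) * (\<Sum>s\<in>S. (?c s)\<^sup>2))"
      by (intro mult_left_mono Cauchy_Schwarz_ineq_sum) auto
    finally show ?thesis by (simp add: S_av2 algebra_simps)
  qed
  have "(\<Sum>x\<in>X n. (cmod (comm b \<phi> n x))\<^sup>2) \<le> (\<Sum>x\<in>X n. (L / P)\<^sup>2 * (P - 1) * (\<Sum>s\<in>S. (cmod (\<phi> (Suc n) (x + s * \<pi> ^ n)))\<^sup>2))"
    using pt by (rule sum_mono)
  also have "\<dots> = (L / P)\<^sup>2 * (P - 1) * (\<Sum>y\<in>X (Suc n). (cmod (\<phi> (Suc n) y))\<^sup>2)"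
    using X_sum[of "\<lambda>y. (cmod (\<phi> (Suc n) y))\<^sup>2" n] by (simp add: sum_distrib_left[symmetric])
  finally have "T (comm b \<phi>) n \<le> (L / P)\<^sup>2 * (P - 1) * (\<Sum>y\<in>X (Suc n). (cmod (\<phi> (Suc n) y))\<^sup>2) * w n"
    using w_pos by (intro mult_right_mono) (auto simp: less_imp_le)
  also have "\<dots> = L\<^sup>2 * ((P - 1) / P) * T \<phi> (Suc n)"
  proof -
    have gen: "\<And>Sm W::real. (L / P)\<^sup>2 * (P - 1) * Sm * (P * W) = L\<^sup>2 * ((P - 1) / P) * (Sm * W)"
    proof -
      fix Sm W :: real
      have "P \<noteq> 0" using p_pos by simp
      then show "(L / P)\<^sup>2 * (P - 1) * Sm * (P * W) = L\<^sup>2 * ((P - 1) / P) * (Sm * W)"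
        by (simp add: power2_eq_square field_simps)
    qed
    show ?thesis unfolding w_Suc[of n] by (rule gen)
  qed
  finally show ?thesis .
qed


lemma T_nonneg: "T \<phi> n \<ge> 0" using w_pos by (intro mult_nonneg_nonneg sum_nonneg) (auto simp: less_imp_le)

lemma inH_iff: "inH p f \<pi> S \<phi> \<longleftrightarrow> (\<forall>n x. x \<notin> X n \<longrightarrow> \<phi> n x = 0) \<and> summable (T \<phi>)"
  by (simp add: inH_def)

lemma hnorm_eq: "hnorm p f \<pi> S \<phi> = sqrt (suminf (T \<phi>))"
  by (simp add: hnorm_def)

lemma comm_summable:
  assumes L0: "L \<ge> 0" and Lb: "\<And>u v. u \<in> R \<Longrightarrow> v \<in> R \<Longrightarrow> cmod (b u - b v) \<le> L * av (u - v)"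
    and sm: "summable (T \<phi>)"
  shows "summable (T (comm b \<phi>))"
proof (rule summable_comparison_test')
  show "summable (\<lambda>n. L\<^sup>2 * ((P - 1) / P) * T \<phi> (Suc n))"
    by (rule summable_mult[OF summable_Suc_iff[THEN iffD2, OF sm]])
  fix n :: nat
  show "norm (T (comm b \<phi>) n) \<le> L\<^sup>2 * ((P - 1) / P) * T \<phi> (Suc n)"
    using level_bound[OF L0 Lb] T_nonneg[of "comm b \<phi>" n] by simp
qed

lemma D_upper:
  assumes L0: "L \<ge> 0" and Lb: "\<And>u v. u \<in> R \<Longrightarrow> v \<in> R \<Longrightarrow> cmod (b u - b v) \<le> L * av (u - v)"
    and sm: "summable (T \<phi>)"
  shows "hnorm p f \<pi> S (comm b \<phi>) \<le> sqrt ((P - 1) / P) * L * hnorm p f \<pi> S \<phi>"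
proof -
  let ?C = "L\<^sup>2 * ((P - 1) / P)"
  have C0: "?C \<ge> 0" using P_gt1 by simp
  have sm1: "summable (\<lambda>n. T \<phi> (Suc n))" by (rule summable_Suc_iff[THEN iffD2, OF sm])
  have "suminf (T (comm b \<phi>)) \<le> (\<Sum>n. ?C * T \<phi> (Suc n))"
    using level_bound[OF L0 Lb] comm_summable[OF L0 Lb sm] sm1
    by (intro suminf_le) (auto intro: summable_mult)
  also have "\<dots> = ?C * (\<Sum>n. T \<phi> (Suc n))" using sm1 by (rule suminf_mult)
  also have "\<dots> \<le> ?C * suminf (T \<phi>)"
    using C0 suminf_split_head[OF sm] T_nonneg[of \<phi> 0] by (intro mult_left_mono) auto
  finally have le: "suminf (T (comm b \<phi>)) \<le> ?C * suminf (T \<phi>)" .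
  have "hnorm p f \<pi> S (comm b \<phi>) \<le> sqrt (?C * suminf (T \<phi>))"
    unfolding hnorm_eq using le by simp
  also have "\<dots> = sqrt ((P - 1) / P) * L * hnorm p f \<pi> S \<phi>"
  proof -
    have gen: "\<And>c Sm. sqrt (L\<^sup>2 * c * Sm) = sqrt c * L * sqrt Sm"
      using L0 by (simp add: real_sqrt_mult)
    show ?thesis unfolding hnorm_eq by (rule gen)
  qed
  finally show ?thesis .
qed

definition fs :: "nat \<Rightarrow> 'a vec \<Rightarrow> bool" where
  "fs N \<phi> \<longleftrightarrow> (\<forall>n\<ge>N. \<forall>x. \<phi> n x = 0) \<and> (\<forall>n x. x \<notin> X n \<longrightarrow> \<phi> n x = 0)"

lemma fs_inH: "fs N \<phi> \<Longrightarrow> inH p f \<pi> S \<phi>"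
  unfolding inH_iff
proof
  assume a: "fs N \<phi>"
  then show "\<forall>n x. x \<notin> X n \<longrightarrow> \<phi> n x = 0" by (simp add: fs_def)
  show "summable (T \<phi>)"
    by (rule summable_finite[of "{..<N}"]) (use a in \<open>auto simp: fs_def\<close>)
qed

lemma fs_Dop: "fs N \<phi> \<Longrightarrow> fs N (Dop p e f \<pi> S \<phi>)"
  by (auto simp: fs_def Dop_def)

lemma fs_rho: "fs N \<phi> \<Longrightarrow> fs N (rho b \<phi>)"
  by (auto simp: fs_def rho_def)

lemma fs_domD: "fs N \<phi> \<Longrightarrow> \<phi> \<in> domD p e f \<pi> S"
  unfolding domD_def using fs_inH fs_Dop by blast

lemma hinner_fs: "(\<And>n x. n \<ge> N \<Longrightarrow> \<phi> n x = 0) \<Longrightarrow>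
  hinner p f \<pi> S \<phi> \<psi> = (\<Sum>n<N. (\<Sum>x\<in>X n. \<phi> n x * cnj (\<psi> n x)) * complex_of_real (w n))"
  unfolding hinner_def by (rule suminf_finite) auto

lemma hinner_zero: "hinner p f \<pi> S \<phi> (\<lambda>_ _. 0) = 0"
  unfolding hinner_def by simp

lemma inH_zero: "inH p f \<pi> S (\<lambda>_ _. 0)"
  unfolding inH_iff by simp

definition delta :: "nat \<Rightarrow> 'a \<Rightarrow> 'a vec" where
  "delta n x = (\<lambda>m y. if m = n \<and> y = x then 1 else 0)"

lemma fs_delta: "x \<in> X n \<Longrightarrow> fs (Suc n) (delta n x)"
  by (auto simp: fs_def delta_def)

lemma hinner_delta: "x \<in> X n \<Longrightarrow> hinner p f \<pi> S (delta n x) \<eta> = cnj (\<eta> n x) * complex_of_real (w n)"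
proof -
  assume x: "x \<in> X n"
  have "hinner p f \<pi> S (delta n x) \<eta> =
     (\<Sum>m<Suc n. (\<Sum>y\<in>X m. delta n x m y * cnj (\<eta> m y)) * complex_of_real (w m))"
    by (rule hinner_fs) (auto simp: delta_def)
  also have "\<dots> = (\<Sum>m<Suc n. (if m = n then cnj (\<eta> n x) * complex_of_real (w n) else 0))"
  proof (rule sum.cong)
    fix m assume "m \<in> {..<Suc n}"
    show "(\<Sum>y\<in>X m. delta n x m y * cnj (\<eta> m y)) * complex_of_real (w m) =
        (if m = n then cnj (\<eta> n x) * complex_of_real (w n) else 0)"
    proof (cases "m = n")
      case True
      have "(\<Sum>y\<in>X m. delta n x m y * cnj (\<eta> m y)) = (\<Sum>y\<in>X n. if y = x then cnj (\<eta> n x) else 0)"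
        using True by (intro sum.cong) (auto simp: delta_def)
      also have "\<dots> = cnj (\<eta> n x)" using x X_finite by simp
      finally show ?thesis using True by simp
    qed (simp add: delta_def)
  qed simp
  also have "\<dots> = cnj (\<eta> n x) * complex_of_real (w n)" by simp
  finally show ?thesis .
qed

lemma adj_unique:
  assumes a1: "is_adj_val p e f \<pi> S \<psi> \<eta>" and a2: "is_adj_val p e f \<pi> S \<psi> \<eta>'"
  shows "\<eta> = \<eta>'"
proof -
  have "\<eta> n x = \<eta>' n x" for n x
  proof (cases "x \<in> X n")
    case False
    then show ?thesis using a1 a2 by (simp add: is_adj_val_def inH_iff)
  next
    case True
    have d: "delta n x \<in> domD p e f \<pi> S" using fs_domD fs_delta True by blast
    have "hinner p f \<pi> S (delta n x) \<eta> = hinner p f \<pi> S (delta n x) \<eta>'"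
      using a1 a2 d unfolding is_adj_val_def by metis
    then have "cnj (\<eta> n x) * complex_of_real (w n) = cnj (\<eta>' n x) * complex_of_real (w n)"
      using hinner_delta True by simp
    then have "cnj (\<eta> n x) = cnj (\<eta>' n x)" using w_pos
      by (metis mult_cancel_right of_real_eq_0_iff order_less_irrefl)
    then show ?thesis by simp
  qed
  then show ?thesis by (simp add: fun_eq_iff)
qed

lemma Dstar_adj: "\<psi> \<in> domDstar p e f \<pi> S \<Longrightarrow> is_adj_val p e f \<pi> S \<psi> (Dstar p e f \<pi> S \<psi>)"
proof -
  assume "\<psi> \<in> domDstar p e f \<pi> S"
  then obtain \<eta> where h: "is_adj_val p e f \<pi> S \<psi> \<eta>" unfolding domDstar_def by blast
  show ?thesis unfolding Dstar_def by (rule theI[of _ \<eta>]) (use h adj_unique in blast)+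
qed


lemma CS2:
  fixes u v :: "nat \<Rightarrow> 'a \<Rightarrow> real"
  assumes "finite I" "\<And>n. n \<in> I \<Longrightarrow> finite (Y n)"
  shows "(\<Sum>n\<in>I. \<Sum>x\<in>Y n. u n x * v n x)\<^sup>2 \<le>
         (\<Sum>n\<in>I. \<Sum>x\<in>Y n. (u n x)\<^sup>2) * (\<Sum>n\<in>I. \<Sum>x\<in>Y n. (v n x)\<^sup>2)"
proof -
  have e: "\<And>g. (\<Sum>n\<in>I. \<Sum>x\<in>Y n. g n x) = (\<Sum>z\<in>Sigma I Y. g (fst z) (snd z))"
    using assms by (subst sum.Sigma) (auto simp: split_def)
  show ?thesis unfolding e by (rule Cauchy_Schwarz_ineq_sum)
qed

lemma sum_diff2:
  fixes A B :: "nat \<Rightarrow> 'a \<Rightarrow> complex"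
  shows "(\<Sum>n<N. (\<Sum>x\<in>X n. A n x) * W n) - (\<Sum>n<N. (\<Sum>x\<in>X n. B n x) * W n) =
         (\<Sum>n<N. (\<Sum>x\<in>X n. A n x - B n x) * W n)"
  by (simp add: sum_subtractf left_diff_distrib)

lemma sq_cancel: "(Q::real) \<ge> 0 \<Longrightarrow> c \<ge> 0 \<Longrightarrow> Q * Q \<le> Q * c \<Longrightarrow> Q \<le> c"
  by (cases "Q = 0") (auto simp: mult_le_cancel_left)

lemma star_bound:
  assumes L0: "L \<ge> 0" and Lb: "\<And>u v. u \<in> R \<Longrightarrow> v \<in> R \<Longrightarrow> cmod (a u - a v) \<le> L * av (u - v)"
    and h1: "\<phi>1 \<in> domDstar p e f \<pi> S" and h2: "rho a \<phi>1 \<in> domDstar p e f \<pi> S"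
  shows "hnorm p f \<pi> S (vdiff (Dstar p e f \<pi> S (rho a \<phi>1)) (rho a (Dstar p e f \<pi> S \<phi>1)))
         \<le> sqrt ((P - 1) / P) * L * hnorm p f \<pi> S \<phi>1 \<and>
         0 \<le> hnorm p f \<pi> S (vdiff (Dstar p e f \<pi> S (rho a \<phi>1)) (rho a (Dstar p e f \<pi> S \<phi>1)))"
proof -
  define \<eta>1 where "\<eta>1 = Dstar p e f \<pi> S \<phi>1"
  define \<eta>2 where "\<eta>2 = Dstar p e f \<pi> S (rho a \<phi>1)"
  define \<xi> where "\<xi> = vdiff \<eta>2 (rho a \<eta>1)"
  define b where "b = (\<lambda>x. cnj (a x))"
  let ?K2 = "L\<^sup>2 * ((P - 1) / P)"
  let ?H = "suminf (T \<phi>1)"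
  have adj1: "is_adj_val p e f \<pi> S \<phi>1 \<eta>1" using Dstar_adj[OF h1] by (simp add: \<eta>1_def)
  have adj2: "is_adj_val p e f \<pi> S (rho a \<phi>1) \<eta>2" using Dstar_adj[OF h2] by (simp add: \<eta>2_def)
  have iH1: "inH p f \<pi> S \<eta>1" and iH2: "inH p f \<pi> S \<eta>2" using adj1 adj2 by (auto simp: is_adj_val_def)
  have smphi: "summable (T \<phi>1)" using h1 by (simp add: domDstar_def inH_iff)
  have xi0: "\<xi> n x = 0" if "x \<notin> X n" for n x
    using iH1 iH2 that by (simp add: \<xi>_def vdiff_def rho_def inH_iff)
  have Lbb: "cmod (b u - b v) \<le> L * av (u - v)" if "u \<in> R" "v \<in> R" for u v
  proof -
    have "cmod (b u - b v) = cmod (a u - a v)"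
      by (metis b_def complex_cnj_diff complex_mod_cnj)
    then show ?thesis using Lb that by simp
  qed
  have K20: "?K2 \<ge> 0" using P_gt1 by simp
  have H0: "?H \<ge> 0" using smphi T_nonneg by (intro suminf_nonneg) auto
  have QN: "(\<Sum>n<N. T \<xi> n) \<le> ?K2 * ?H" for N
  proof -
    define \<psi> where "\<psi> = (\<lambda>n x. if n < N then \<xi> n x else 0)"
    define \<psi>' where "\<psi>' = rho b \<psi>"
    let ?Q = "\<Sum>n<N. T \<xi> n"
    let ?F = "\<lambda>gg \<theta>. (\<Sum>n<N. (\<Sum>x\<in>X n. gg n x * cnj (\<theta> n x)) * complex_of_real (w n))"
    have fs1: "fs N \<psi>" using xi0 by (auto simp: fs_def \<psi>_def)
    have fs2: "fs N \<psi>'" unfolding \<psi>'_def by (rule fs_rho[OF fs1])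
    have fs3: "fs N (Dop p e f \<pi> S \<psi>)" by (rule fs_Dop[OF fs1])
    have fs4: "fs N (Dop p e f \<pi> S \<psi>')" by (rule fs_Dop[OF fs2])
    have hf: "\<And>gg \<theta>. fs N gg \<Longrightarrow> hinner p f \<pi> S gg \<theta> = ?F gg \<theta>"
      by (rule hinner_fs) (auto simp: fs_def)
    have E1: "?F (Dop p e f \<pi> S \<psi>) (rho a \<phi>1) = ?F \<psi> \<eta>2"
      using adj2 fs_domD[OF fs1] hf[OF fs1] hf[OF fs3] unfolding is_adj_val_def by metis
    have E2: "?F (Dop p e f \<pi> S \<psi>') \<phi>1 = ?F \<psi>' \<eta>1"
      using adj1 fs_domD[OF fs2] hf[OF fs2] hf[OF fs4] unfolding is_adj_val_def by metis
    have "complex_of_real ?Q = ?F \<psi> \<xi>"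
    proof -
      have "complex_of_real ?Q = (\<Sum>n<N. complex_of_real (\<Sum>x\<in>X n. (cmod (\<xi> n x))\<^sup>2) * complex_of_real (w n))"
        by simp
      also have "\<dots> = ?F \<psi> \<xi>"
      proof (rule sum.cong)
        fix n assume n: "n \<in> {..<N}"
        have "complex_of_real (\<Sum>x\<in>X n. (cmod (\<xi> n x))\<^sup>2) = (\<Sum>x\<in>X n. \<psi> n x * cnj (\<xi> n x))"
          unfolding of_real_sum
        proof (rule sum.cong[OF refl])
          fix x show "complex_of_real ((cmod (\<xi> n x))\<^sup>2) = \<psi> n x * cnj (\<xi> n x)"
            using n by (subst complex_norm_square) (simp add: \<psi>_def)
        qed
        then show "complex_of_real (\<Sum>x\<in>X n. (cmod (\<xi> n x))\<^sup>2) * complex_of_real (w n) =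
            (\<Sum>x\<in>X n. \<psi> n x * cnj (\<xi> n x)) * complex_of_real (w n)" by simp
      qed simp
      finally show ?thesis .
    qed
    also have "\<dots> = ?F \<psi> \<eta>2 - ?F \<psi>' \<eta>1"
      unfolding sum_diff2 by (intro sum.cong refl arg_cong2[where f="(*)"])
         (simp_all add: \<xi>_def \<psi>'_def vdiff_def rho_def b_def algebra_simps)
    also have "\<dots> = ?F (Dop p e f \<pi> S \<psi>) (rho a \<phi>1) - ?F (Dop p e f \<pi> S \<psi>') \<phi>1"
      using E1 E2 by simp
    also have "\<dots> = - ?F (comm b \<psi>) \<phi>1"
      unfolding sum_diff2 sum_negf[symmetric] by (intro sum.cong refl)
        (simp add: comm_def \<psi>'_def vdiff_def rho_def b_def algebra_simps sum_subtractf sum_negf)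
    finally have eqQ: "complex_of_real ?Q = - ?F (comm b \<psi>) \<phi>1" .
    have Q0: "?Q \<ge> 0" using T_nonneg by (intro sum_nonneg) auto
    let ?u = "\<lambda>n x. cmod (comm b \<psi> n x) * sqrt (w n)"
    let ?v = "\<lambda>n x. cmod (\<phi>1 n x) * sqrt (w n)"
    have "?Q = cmod (?F (comm b \<psi>) \<phi>1)"
    proof -
      have "cmod (complex_of_real ?Q) = ?Q" unfolding norm_of_real using Q0 by (rule abs_of_nonneg)
      then have "cmod (- ?F (comm b \<psi>) \<phi>1) = ?Q" by (simp only: eqQ)
      then have "cmod (?F (comm b \<psi>) \<phi>1) = ?Q" unfolding norm_minus_cancel .
      then show ?thesis by (rule sym)
    qed
    also have "\<dots> \<le> (\<Sum>n<N. cmod ((\<Sum>x\<in>X n. comm b \<psi> n x * cnj (\<phi>1 n x)) * complex_of_real (w n)))"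
      by (rule norm_sum)
    also have "\<dots> \<le> (\<Sum>n<N. \<Sum>x\<in>X n. ?u n x * ?v n x)"
    proof (rule sum_mono)
      fix n assume "n \<in> {..<N}"
      have "cmod ((\<Sum>x\<in>X n. comm b \<psi> n x * cnj (\<phi>1 n x)) * complex_of_real (w n))
          = cmod (\<Sum>x\<in>X n. comm b \<psi> n x * cnj (\<phi>1 n x)) * w n"
        using w_pos by (simp add: norm_mult less_imp_le)
      also have "\<dots> \<le> (\<Sum>x\<in>X n. cmod (comm b \<psi> n x * cnj (\<phi>1 n x))) * w n"
        using w_pos by (intro mult_right_mono norm_sum) (auto simp: less_imp_le)
      also have "\<dots> = (\<Sum>x\<in>X n. ?u n x * ?v n x)"
      proof -
        have gen: "(\<Sum>x\<in>X n. gg x * hh x) * W = (\<Sum>x\<in>X n. (gg x * sqrt W) * (hh x * sqrt W))"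
          if W0: "W \<ge> 0" for W :: real and gg hh :: "'a \<Rightarrow> real"
        proof -
          have s1: "(gg x * sqrt W) * (hh x * sqrt W) = gg x * hh x * (sqrt W * sqrt W)" for x by algebra
          have s2: "sqrt W * sqrt W = W" using W0 by simp
          show ?thesis unfolding s1 s2 by (simp add: sum_distrib_right)
        qed
        have "(\<Sum>x\<in>X n. cmod (comm b \<psi> n x * cnj (\<phi>1 n x))) * w n =
              (\<Sum>x\<in>X n. cmod (comm b \<psi> n x) * cmod (\<phi>1 n x)) * w n"
          by (simp add: norm_mult)
        also have "\<dots> = (\<Sum>x\<in>X n. ?u n x * ?v n x)"
          by (rule gen) (use w_pos in \<open>simp add: less_imp_le\<close>)
        finally show ?thesis .
      qed
      finally show "cmod ((\<Sum>x\<in>X n. comm b \<psi> n x * cnj (\<phi>1 n x)) * complex_of_real (w n))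
          \<le> (\<Sum>x\<in>X n. ?u n x * ?v n x)" .
    qed
    finally have Qle: "?Q \<le> (\<Sum>n<N. \<Sum>x\<in>X n. ?u n x * ?v n x)" .
    have usq: "(\<Sum>n<N. \<Sum>x\<in>X n. (?u n x)\<^sup>2) = (\<Sum>n<N. T (comm b \<psi>) n)"
      using w_pos by (intro sum.cong refl) (simp add: power_mult_distrib sum_distrib_right less_imp_le)
    have vsq: "(\<Sum>n<N. \<Sum>x\<in>X n. (?v n x)\<^sup>2) = (\<Sum>n<N. T \<phi>1 n)"
      using w_pos by (intro sum.cong refl) (simp add: power_mult_distrib sum_distrib_right less_imp_le)
    have A: "(\<Sum>n<N. T (comm b \<psi>) n) \<le> ?K2 * ?Q"
    proof -
      have "(\<Sum>n<N. T (comm b \<psi>) n) \<le> (\<Sum>n<N. ?K2 * T \<psi> (Suc n))"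
        using level_bound[OF L0 Lbb] by (intro sum_mono) auto
      also have "\<dots> = ?K2 * (\<Sum>n<N. T \<psi> (Suc n))" by (simp add: sum_distrib_left)
      finally have a1: "(\<Sum>n<N. T (comm b \<psi>) n) \<le> ?K2 * (\<Sum>n<N. T \<psi> (Suc n))" .
      have "(\<Sum>n<N. T \<psi> (Suc n)) \<le> (\<Sum>n<Suc N. T \<psi> n)"
        using sum.lessThan_Suc_shift[of "T \<psi>" N] T_nonneg[of \<psi> 0] by simp
      also have "(\<Sum>n<Suc N. T \<psi> n) = ?Q"
        by (simp add: \<psi>_def)
      finally have a2: "(\<Sum>n<N. T \<psi> (Suc n)) \<le> ?Q" .
      show ?thesis using a1 mult_left_mono[OF a2 K20] by linarith
    qed
    have B: "(\<Sum>n<N. T \<phi>1 n) \<le> ?H"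
      using smphi T_nonneg by (intro sum_le_suminf) auto
    have "?Q\<^sup>2 \<le> (\<Sum>n<N. \<Sum>x\<in>X n. ?u n x * ?v n x)\<^sup>2"
      using Qle Q0 by (intro power_mono) auto
    also have "\<dots> \<le> (\<Sum>n<N. \<Sum>x\<in>X n. (?u n x)\<^sup>2) * (\<Sum>n<N. \<Sum>x\<in>X n. (?v n x)\<^sup>2)"
      by (rule CS2) (auto simp: X_finite)
    also have "\<dots> \<le> (?K2 * ?Q) * ?H"
      unfolding usq vsq
    proof (rule mult_mono[OF A B])
      show "0 \<le> ?K2 * ?Q" using K20 Q0 by (rule mult_nonneg_nonneg)
      show "0 \<le> (\<Sum>n<N. T \<phi>1 n)" using T_nonneg by (intro sum_nonneg) auto
    qed
    finally have "?Q * ?Q \<le> ?Q * (?K2 * ?H)" by (simp add: power2_eq_square algebra_simps)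
    then show "?Q \<le> ?K2 * ?H"
      by (rule sq_cancel[OF Q0 mult_nonneg_nonneg[OF K20 H0]])
  qed
  have smxi: "summable (T \<xi>)"
    by (rule summableI_nonneg_bounded[where f="T \<xi>"]) (rule T_nonneg, rule QN)
  have nn: "0 \<le> hnorm p f \<pi> S \<xi>" unfolding hnorm_eq using smxi T_nonneg by (auto intro: suminf_nonneg)
  have "suminf (T \<xi>) \<le> ?K2 * ?H" by (rule suminf_le_const[OF smxi]) (rule QN)
  then have "hnorm p f \<pi> S \<xi> \<le> sqrt (?K2 * ?H)" unfolding hnorm_eq by simp
  also have "\<dots> = sqrt ((P - 1) / P) * L * hnorm p f \<pi> S \<phi>1"
  proof -
    have gen: "\<And>c Sm. sqrt (L\<^sup>2 * c * Sm) = sqrt c * L * sqrt Sm"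
      using L0 by (simp add: real_sqrt_mult)
    show ?thesis unfolding hnorm_eq by (rule gen)
  qed
  finally show ?thesis using nn by (simp add: \<xi>_def \<eta>1_def \<eta>2_def)
qed


definition Qset :: "('a \<Rightarrow> complex) \<Rightarrow> real set" where
  "Qset a = {cmod (a x - a y) / av (x - y) | x y. x \<in> R \<and> y \<in> R \<and> x \<noteq> y}"

lemma L1_Qset: "L1 av a = Sup (Qset a)" by (simp add: L1_def Qset_def)

lemma av_pos: "x \<noteq> 0 \<Longrightarrow> av x > 0"
  using av_zero av_nonneg by (metis less_eq_real_def)

lemma Qset_ne: "Qset a \<noteq> {}"
proof -
  have "(1::'a) \<in> R" "(0::'a) \<in> R" by (simp_all add: R_iff av_one)
  then show ?thesis unfolding Qset_def by (metis (mono_tags, lifting) empty_iff mem_Collect_eq zero_neq_one)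
qed

lemma Qset_bdd: "lipschitz_on_R av a \<Longrightarrow> bdd_above (Qset a)"
proof -
  assume "lipschitz_on_R av a"
  then obtain K where K: "\<And>x y. x \<in> R \<Longrightarrow> y \<in> R \<Longrightarrow> cmod (a x - a y) \<le> K * av (x - y)"
    unfolding lipschitz_on_R_def by blast
  show ?thesis unfolding bdd_above_def
  proof (intro exI ballI)
    fix z assume "z \<in> Qset a"
    then obtain x y where xy: "x \<in> R" "y \<in> R" "x \<noteq> y" "z = cmod (a x - a y) / av (x - y)"
      unfolding Qset_def by blast
    have "av (x - y) > 0" using xy av_pos by simp
    then show "z \<le> K" using K[OF xy(1,2)] xy(4) by (simp add: divide_le_eq)
  qed
qed

lemma lip_L1: "lipschitz_on_R av a \<Longrightarrow> u \<in> R \<Longrightarrow> v \<in> R \<Longrightarrow> cmod (a u - a v) \<le> L1 av a * av (u - v)"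
proof (cases "u = v")
  case False
  assume l: "lipschitz_on_R av a" and uv: "u \<in> R" "v \<in> R"
  have "cmod (a u - a v) / av (u - v) \<in> Qset a" using uv False unfolding Qset_def by blast
  then have "cmod (a u - a v) / av (u - v) \<le> L1 av a"
    unfolding L1_Qset using Qset_bdd[OF l] by (rule cSup_upper)
  moreover have "av (u - v) > 0" using False av_pos by simp
  ultimately show ?thesis by (simp add: divide_le_eq)
qed simp

lemma L1_nonneg: "lipschitz_on_R av a \<Longrightarrow> L1 av a \<ge> 0"
proof -
  assume l: "lipschitz_on_R av a"
  have "(1::'a) \<in> R" "(0::'a) \<in> R" by (simp_all add: R_iff av_one)
  then have "cmod (a 1 - a 0) / av (1 - 0) \<in> Qset a" unfolding Qset_def by fastforce
  then have "cmod (a 1 - a 0) / av (1 - 0) \<le> L1 av a"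
    unfolding L1_Qset using Qset_bdd[OF l] by (rule cSup_upper)
  moreover have "cmod (a 1 - a 0) / av (1 - 0) \<ge> 0" using av_nonneg by simp
  ultimately show ?thesis by linarith
qed

lemma upper_elem:
  assumes l: "lipschitz_on_R av a"
    and h1: "\<phi>1 \<in> domDstar p e f \<pi> S" and h2: "\<phi>2 \<in> domD p e f \<pi> S"
    and h3: "rho a \<phi>1 \<in> domDstar p e f \<pi> S"
    and pos: "(hnorm p f \<pi> S \<phi>1)\<^sup>2 + (hnorm p f \<pi> S \<phi>2)\<^sup>2 > 0"
  shows "sqrt ((hnorm p f \<pi> S (vdiff (Dop p e f \<pi> S (rho a \<phi>2)) (rho a (Dop p e f \<pi> S \<phi>2))))\<^sup>2
            + (hnorm p f \<pi> S (vdiff (Dstar p e f \<pi> S (rho a \<phi>1)) (rho a (Dstar p e f \<pi> S \<phi>1))))\<^sup>2)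
        / sqrt ((hnorm p f \<pi> S \<phi>1)\<^sup>2 + (hnorm p f \<pi> S \<phi>2)\<^sup>2)
       \<le> sqrt ((P - 1) / P) * L1 av a"
proof -
  let ?L = "L1 av a"
  let ?K = "sqrt ((P - 1) / P) * ?L"
  let ?A = "hnorm p f \<pi> S (comm a \<phi>2)"
  let ?B = "hnorm p f \<pi> S (vdiff (Dstar p e f \<pi> S (rho a \<phi>1)) (rho a (Dstar p e f \<pi> S \<phi>1)))"
  let ?n1 = "hnorm p f \<pi> S \<phi>1"
  let ?n2 = "hnorm p f \<pi> S \<phi>2"
  have L0: "?L \<ge> 0" using L1_nonneg[OF l] .
  have Lb: "\<And>u v. u \<in> R \<Longrightarrow> v \<in> R \<Longrightarrow> cmod (a u - a v) \<le> ?L * av (u - v)" using lip_L1[OF l] .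
  have sm2: "summable (T \<phi>2)" using h2 by (simp add: domD_def inH_iff)
  have A: "?A \<le> ?K * ?n2" using D_upper[OF L0 Lb sm2] by simp
  have B: "?B \<le> ?K * ?n1" using star_bound[OF L0 Lb h1 h3] by simp
  have A0: "?A \<ge> 0" unfolding hnorm_eq using comm_summable[OF L0 Lb sm2] T_nonneg
    by (auto intro: suminf_nonneg)
  have B0: "?B \<ge> 0" using star_bound[OF L0 Lb h1 h3] by simp
  have K0: "?K \<ge> 0" using L0 P_gt1 by simp
  have "?A\<^sup>2 + ?B\<^sup>2 \<le> (?K * ?n2)\<^sup>2 + (?K * ?n1)\<^sup>2"
    using A B A0 B0 by (intro add_mono power_mono) auto
  also have "\<dots> = ?K\<^sup>2 * (?n1\<^sup>2 + ?n2\<^sup>2)" by (simp add: power_mult_distrib algebra_simps)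
  finally have "sqrt (?A\<^sup>2 + ?B\<^sup>2) \<le> sqrt (?K\<^sup>2 * (?n1\<^sup>2 + ?n2\<^sup>2))" by simp
  also have "\<dots> = ?K * sqrt (?n1\<^sup>2 + ?n2\<^sup>2)" using K0 by (simp add: real_sqrt_mult)
  finally have "sqrt (?A\<^sup>2 + ?B\<^sup>2) \<le> ?K * sqrt (?n1\<^sup>2 + ?n2\<^sup>2)" .
  moreover have "sqrt (?n1\<^sup>2 + ?n2\<^sup>2) > 0" using pos by simp
  ultimately show ?thesis unfolding comm_def by (simp add: divide_le_eq)
qed


lemma zero_domDstar: "(\<lambda>_ _. 0) \<in> domDstar p e f \<pi> S"
  unfolding domDstar_def is_adj_val_def using inH_zero hinner_zero by auto

lemma rho_zero: "rho a (\<lambda>_ _. 0) = (\<lambda>_ _. 0)" by (simp add: rho_def)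

lemma hnorm_zero: "hnorm p f \<pi> S (\<lambda>_ _. 0) = 0" by (simp add: hnorm_def)

lemma T_delta: "y \<in> X m \<Longrightarrow> T (delta m y) k = (if k = m then w m else 0)"
proof -
  assume y: "y \<in> X m"
  have "(\<Sum>z\<in>X k. (cmod (delta m y k z))\<^sup>2) = (if k = m then 1 else 0)"
  proof (cases "k = m")
    case True
    have "(\<Sum>z\<in>X k. (cmod (delta m y k z))\<^sup>2) = (\<Sum>z\<in>X m. if z = y then 1 else 0)"
      using True by (intro sum.cong) (auto simp: delta_def)
    also have "\<dots> = 1" using y X_finite by simp
    finally show ?thesis using True by simp
  qed (simp add: delta_def)
  then show ?thesis by simp
qed

lemma hnorm_delta: "y \<in> X m \<Longrightarrow> hnorm p f \<pi> S (delta m y) = sqrt (w m)"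
proof -
  assume y: "y \<in> X m"
  have "suminf (T (delta m y)) = (\<Sum>k\<in>{m}. T (delta m y) k)"
  proof (rule suminf_finite)
    fix k assume "k \<notin> {m}"
    then show "T (delta m y) k = 0" using T_delta[OF y, of k] by simp
  qed simp
  also have "\<dots> = w m" using T_delta[OF y, of m] by simp
  finally show ?thesis unfolding hnorm_eq by simp
qed

lemma delta_elem:
  assumes l: "lipschitz_on_R av a" and x: "x \<in> X n" and s: "s \<in> S"
  shows "ereal (cmod (a x - a (x + s * \<pi> ^ n)) / (q ^ n * sqrt P)) \<le> L_D p e f \<pi> S a"
proof -
  define y where "y = x + s * \<pi> ^ n"
  have y: "y \<in> X (Suc n)" using XSuc_I[OF x s] by (simp add: y_def)
  define \<phi>2 where "\<phi>2 = delta (Suc n) y"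
  define \<phi>1 :: "'a vec" where "\<phi>1 = (\<lambda>_ _. 0)"
  let ?D = "cmod (a x - a y)"
  let ?A = "hnorm p f \<pi> S (comm a \<phi>2)"
  let ?B = "hnorm p f \<pi> S (vdiff (Dstar p e f \<pi> S (rho a \<phi>1)) (rho a (Dstar p e f \<pi> S \<phi>1)))"
  let ?r = "sqrt (?A\<^sup>2 + ?B\<^sup>2) / sqrt ((hnorm p f \<pi> S \<phi>1)\<^sup>2 + (hnorm p f \<pi> S \<phi>2)\<^sup>2)"
  have fs2: "fs (Suc (Suc n)) \<phi>2" unfolding \<phi>2_def by (rule fs_delta[OF y])
  have n2: "hnorm p f \<pi> S \<phi>2 = sqrt (w (Suc n))" unfolding \<phi>2_def by (rule hnorm_delta[OF y])
  have n1: "hnorm p f \<pi> S \<phi>1 = 0" unfolding \<phi>1_def by (rule hnorm_zero)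
  have mem: "ereal ?r \<in> {ereal (
        sqrt ((hnorm p f \<pi> S (vdiff (Dop p e f \<pi> S (rho a \<phi>2)) (rho a (Dop p e f \<pi> S \<phi>2))))\<^sup>2
            + (hnorm p f \<pi> S (vdiff (Dstar p e f \<pi> S (rho a \<phi>1)) (rho a (Dstar p e f \<pi> S \<phi>1))))\<^sup>2)
        / sqrt ((hnorm p f \<pi> S \<phi>1)\<^sup>2 + (hnorm p f \<pi> S \<phi>2)\<^sup>2)) | \<phi>1 \<phi>2.
      \<phi>1 \<in> domDstar p e f \<pi> S \<and> \<phi>2 \<in> domD p e f \<pi> S \<and>
      rho a \<phi>1 \<in> domDstar p e f \<pi> S \<and> rho a \<phi>2 \<in> domD p e f \<pi> S \<and>
      (hnorm p f \<pi> S \<phi>1)\<^sup>2 + (hnorm p f \<pi> S \<phi>2)\<^sup>2 > 0}"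
  proof -
    have c1: "\<phi>1 \<in> domDstar p e f \<pi> S" unfolding \<phi>1_def by (rule zero_domDstar)
    have c2: "\<phi>2 \<in> domD p e f \<pi> S" by (rule fs_domD[OF fs2])
    have c3: "rho a \<phi>1 \<in> domDstar p e f \<pi> S" unfolding \<phi>1_def rho_zero by (rule zero_domDstar)
    have c4: "rho a \<phi>2 \<in> domD p e f \<pi> S" by (rule fs_domD[OF fs_rho[OF fs2]])
    have c5: "(hnorm p f \<pi> S \<phi>1)\<^sup>2 + (hnorm p f \<pi> S \<phi>2)\<^sup>2 > 0" unfolding n1 n2 using w_pos by simp
    show ?thesis unfolding comm_def using c1 c2 c3 c4 c5 by blast
  qed
  then have rle: "ereal ?r \<le> L_D p e f \<pi> S a" unfolding L_D_def by (rule Sup_upper)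
  have sumeq: "(\<Sum>s'\<in>S. (a x - a (x + s' * \<pi> ^ n)) * \<phi>2 (Suc n) (x + s' * \<pi> ^ n)) = a x - a y"
  proof -
    have "(\<Sum>s'\<in>S. (a x - a (x + s' * \<pi> ^ n)) * \<phi>2 (Suc n) (x + s' * \<pi> ^ n))
        = (\<Sum>s'\<in>S. if s' = s then a x - a y else 0)"
    proof (rule sum.cong[OF refl])
      fix s' assume "s' \<in> S"
      have "x + s' * \<pi> ^ n = y \<longleftrightarrow> s' = s" using pi_nz by (auto simp: y_def)
      then show "(a x - a (x + s' * \<pi> ^ n)) * \<phi>2 (Suc n) (x + s' * \<pi> ^ n) = (if s' = s then a x - a y else 0)"
        by (auto simp: \<phi>2_def delta_def y_def)
    qed
    also have "\<dots> = a x - a y" using s S_fin by simp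
    finally show ?thesis .
  qed
  have cx: "cmod (comm a \<phi>2 n x) = cc n * dd * ?D"
    unfolding comm_in[OF x] sumeq using cc_pos p_pos by (simp add: norm_mult)
  have smc: "summable (T (comm a \<phi>2))"
    using fs_inH[of "Suc (Suc n)" "comm a \<phi>2"] fs2
    unfolding comm_def inH_iff vdiff_def by (auto simp: fs_def Dop_def rho_def)
  have "(cc n * dd * ?D)\<^sup>2 * w n \<le> T (comm a \<phi>2) n"
  proof -
    have "(cmod (comm a \<phi>2 n x))\<^sup>2 \<le> (\<Sum>z\<in>X n. (cmod (comm a \<phi>2 n z))\<^sup>2)"
      using x X_finite by (intro member_le_sum) auto
    then show ?thesis unfolding cx using w_pos by (intro mult_right_mono) (auto simp: less_imp_le)
  qed
  also have "\<dots> \<le> suminf (T (comm a \<phi>2))"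
    using sum_le_suminf[OF smc, of "{n}"] T_nonneg by simp
  finally have Asq: "(cc n * dd * ?D)\<^sup>2 * w n \<le> ?A\<^sup>2"
    unfolding hnorm_eq using smc T_nonneg by (simp add: suminf_nonneg)
  have A0: "?A \<ge> 0" unfolding hnorm_eq using smc T_nonneg by (auto intro: suminf_nonneg)
  have "cc n * dd * ?D * sqrt (w n) \<le> ?A"
  proof -
    have "sqrt ((cc n * dd * ?D)\<^sup>2 * w n) \<le> sqrt (?A\<^sup>2)" using Asq by (rule real_sqrt_le_mono)
    moreover have "sqrt ((cc n * dd * ?D)\<^sup>2 * w n) = cc n * dd * ?D * sqrt (w n)"
      using cc_pos p_pos by (simp add: real_sqrt_mult)
    moreover have "sqrt (?A\<^sup>2) = ?A" using A0 by simp
    ultimately show ?thesis by simp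
  qed
  also have "?A \<le> sqrt (?A\<^sup>2 + ?B\<^sup>2)" by (rule real_le_rsqrt) simp
  finally have num: "cc n * dd * ?D * sqrt (w n) \<le> sqrt (?A\<^sup>2 + ?B\<^sup>2)" .
  have den: "sqrt ((hnorm p f \<pi> S \<phi>1)\<^sup>2 + (hnorm p f \<pi> S \<phi>2)\<^sup>2) = sqrt (w (Suc n))"
    unfolding n1 n2 using w_pos by (simp add: less_imp_le)
  have "?D / (q ^ n * sqrt P) = cc n * dd * ?D * sqrt (w n) / sqrt (w (Suc n))"
  proof -
    have w1: "sqrt (w n) = sqrt P * sqrt (w (Suc n))" unfolding w_Suc[of n] by (simp add: real_sqrt_mult)
    have "cc n = 1 / q ^ n" using cc_q q_pos by (simp add: field_simps)
    moreover have "dd = 1 / P" by (rule dd_eq)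
    moreover have "P = sqrt P * sqrt P" using P_gt1 by simp
    ultimately have "cc n * dd * ?D * sqrt (w n) / sqrt (w (Suc n)) = ?D * sqrt P / (q ^ n * (sqrt P * sqrt P))"
      unfolding w1 using w_pos q_pos by (simp add: field_simps)
    also have "\<dots> = ?D / (q ^ n * sqrt P)"
    proof -
      have g: "\<And>Sv Qv::real. Sv > 0 \<Longrightarrow> Qv > 0 \<Longrightarrow> ?D * Sv / (Qv * (Sv * Sv)) = ?D / (Qv * Sv)"
        by (simp add: field_simps)
      show ?thesis by (rule g) (use P_gt1 q_pos p_pos in auto)
    qed
    finally show ?thesis by simp
  qed
  also have "\<dots> \<le> ?r" unfolding den using num w_pos by (intro divide_right_mono) auto
  finally have "?D / (q ^ n * sqrt P) \<le> ?r" .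
  then have "ereal (?D / (q ^ n * sqrt P)) \<le> ereal ?r" by (simp only: ereal_less_eq(3))
  from order_trans[OF this rle] show ?thesis by (simp only: y_def)
qed


lemma tri: "cmod (A - Cc) \<le> cmod (A - B) + cmod (B - Cc)"
  using norm_triangle_ineq[of "A - B" "B - Cc"] by simp

lemma chain:
  assumes C0: "C \<ge> 0"
    and hyp: "\<And>n x s. x \<in> X n \<Longrightarrow> s \<in> S \<Longrightarrow> cmod (a x - a (x + s * \<pi> ^ n)) \<le> C * q ^ n"
  shows "u \<in> X m \<Longrightarrow> v \<in> X N \<Longrightarrow> m \<le> N \<Longrightarrow> av (u - v) \<le> q ^ m \<Longrightarrow>
     cmod (a u - a v) \<le> C * (q ^ m - q ^ N) / (1 - q)"
proof (induction N arbitrary: v)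
  case 0
  then show ?case by (simp add: X0)
next
  case (Suc N)
  show ?case
  proof (cases "m = Suc N")
    case True
    then have "u = v" using X_key Suc.prems by blast
    then show ?thesis using True by simp
  next
    case False
    then have mN: "m \<le> N" using Suc.prems(3) by simp
    obtain v0 t where v: "v0 \<in> X N" "t \<in> S" "v = v0 + t * \<pi> ^ N" using Suc.prems(2) XSuc_E by blast
    have qNm: "q ^ N \<le> q ^ m" using mN q_pos q_lt1 by (simp add: power_decreasing)
    have "u - v0 = (u - v) + t * \<pi> ^ N" using v by simp
    then have "av (u - v0) \<le> max (av (u - v)) (av (t * \<pi> ^ N))" using av_ultra by metis
    moreover have "av (t * \<pi> ^ N) \<le> q ^ N"
      using v(2) SR q_pos by (auto simp: av_mult av_power R_iff mult_left_le_one_le)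
    ultimately have "av (u - v0) \<le> q ^ m" using Suc.prems(4) qNm by linarith
    then have IH: "cmod (a u - a v0) \<le> C * (q ^ m - q ^ N) / (1 - q)"
      using Suc.IH[OF Suc.prems(1) v(1) mN] by blast
    have st: "cmod (a v0 - a v) \<le> C * q ^ N" using hyp[OF v(1,2)] v(3) by simp
    have "cmod (a u - a v) \<le> C * (q ^ m - q ^ N) / (1 - q) + C * q ^ N"
      using tri[of "a u" "a v" "a v0"] IH st by linarith
    also have "\<dots> = C * (q ^ m - q ^ Suc N) / (1 - q)" using q_lt1 by (simp add: field_simps)
    finally show ?thesis .
  qed
qed

lemma lower_main:
  assumes l: "lipschitz_on_R av a" and C0: "C \<ge> 0"
    and hyp: "\<And>n x s. x \<in> X n \<Longrightarrow> s \<in> S \<Longrightarrow> cmod (a x - a (x + s * \<pi> ^ n)) \<le> C * q ^ n"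
  shows "L1 av a \<le> 2 * C / (1 - q)"
  unfolding L1_Qset
proof (rule cSup_least[OF Qset_ne])
  fix z assume "z \<in> Qset a"
  then obtain x y where xy: "x \<in> R" "y \<in> R" "x \<noteq> y" "z = cmod (a x - a y) / av (x - y)"
    unfolding Qset_def by blast
  let ?L = "L1 av a"
  have L0: "?L \<ge> 0" by (rule L1_nonneg[OF l])
  have "x - y \<in> R" using R_diff xy by blast
  then have "av (x - y) \<le> 1" by (simp add: R_iff)
  moreover have "x - y \<noteq> 0" using xy(3) by simp
  ultimately obtain m where m: "av (x - y) = q ^ m" using av_exact by blast
  have qm: "q ^ m > 0" using q_pos by simp
  have "cmod (a x - a y) \<le> 2 * C * q ^ m / (1 - q)"
  proof (rule field_le_epsilon)
    fix \<epsilon> :: real assume ep: "\<epsilon> > 0"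
    have "\<epsilon> / (2 * ?L + 1) > 0" using ep L0 by simp
    then obtain N0 where N0: "q ^ N0 < \<epsilon> / (2 * ?L + 1)" using real_arch_pow_inv q_lt1 by blast
    define N where "N = max N0 m"
    have qN: "q ^ N \<le> q ^ N0" using q_pos q_lt1 by (simp add: N_def power_decreasing)
    have qNm: "q ^ N \<le> q ^ m" using q_pos q_lt1 by (simp add: N_def power_decreasing)
    obtain xN where xN: "xN \<in> X N" "av (x - xN) \<le> q ^ N" using X_approx xy(1) by blast
    obtain yN where yN: "yN \<in> X N" "av (y - yN) \<le> q ^ N" using X_approx xy(2) by blast
    obtain u where u: "u \<in> X m" "av (x - u) \<le> q ^ m" using X_approx xy(1) by blast
    have "u - xN = (u - x) + (x - xN)" by simp
    then have "av (u - xN) \<le> max (av (u - x)) (av (x - xN))" using av_ultra by metis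
    then have uxN: "av (u - xN) \<le> q ^ m" using u(2) xN(2) qNm av_comm[of u x] by linarith
    have "u - yN = ((u - x) + (x - y)) + (y - yN)" by simp
    then have "av (u - yN) \<le> max (av ((u - x) + (x - y))) (av (y - yN))" using av_ultra by metis
    moreover have "av ((u - x) + (x - y)) \<le> max (av (u - x)) (av (x - y))" by (rule av_ultra)
    ultimately have uyN: "av (u - yN) \<le> q ^ m" using u(2) yN(2) qNm m av_comm[of u x] by linarith
    have mN: "m \<le> N" by (simp add: N_def)
    have c1: "cmod (a u - a xN) \<le> C * (q ^ m - q ^ N) / (1 - q)" by (rule chain[OF C0 hyp u(1) xN(1) mN uxN])
    have c2: "cmod (a u - a yN) \<le> C * (q ^ m - q ^ N) / (1 - q)" by (rule chain[OF C0 hyp u(1) yN(1) mN uyN])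
    have cq: "C * (q ^ m - q ^ N) / (1 - q) \<le> C * q ^ m / (1 - q)"
      using C0 q_lt1 q_pos by (intro divide_right_mono mult_left_mono) auto
    have l1: "cmod (a x - a xN) \<le> ?L * q ^ N"
      using lip_L1[OF l xy(1)] xN X_R L0 by (meson mult_left_mono order_trans subsetD)
    have l2: "cmod (a y - a yN) \<le> ?L * q ^ N"
      using lip_L1[OF l xy(2)] yN X_R L0 by (meson mult_left_mono order_trans subsetD)
    have "cmod (a x - a y) \<le> cmod (a x - a xN) + cmod (a xN - a u) + cmod (a u - a yN) + cmod (a yN - a y)"
      using tri[of "a x" "a y" "a xN"] tri[of "a xN" "a y" "a u"] tri[of "a u" "a y" "a yN"] by linarith
    also have "\<dots> \<le> 2 * ?L * q ^ N + 2 * (C * q ^ m / (1 - q))"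
      using l1 l2 c1 c2 cq norm_minus_commute[of "a xN" "a u"] norm_minus_commute[of "a yN" "a y"] by linarith
    also have "2 * ?L * q ^ N \<le> \<epsilon>"
    proof -
      have "2 * ?L * q ^ N \<le> 2 * ?L * (\<epsilon> / (2 * ?L + 1))" using qN N0 L0 by (intro mult_left_mono) auto
      also have "\<dots> \<le> \<epsilon>" using L0 ep by (simp add: field_simps)
      finally show ?thesis .
    qed
    finally show "cmod (a x - a y) \<le> 2 * C * q ^ m / (1 - q) + \<epsilon>" by simp
  qed
  then show "z \<le> 2 * C / (1 - q)" using xy(4) m qm by (simp add: divide_le_eq)
qed

lemma ppow: "real p powr (1 / real e) = 1 / q"
  using p_pos by (simp add: q_def powr_minus divide_inverse)

end

theorem mainTheorem4:
  fixes p e f :: nat and av :: "'a::field_char_0 \<Rightarrow> real" and \<pi> :: 'a and S :: "'a set"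
    and a :: "'a \<Rightarrow> complex"
  assumes "prime p"
    and "padic_extension p av"
    and "local_data p av e f \<pi> S"
    and "lipschitz_on_R av a"
  shows "ereal ((real p powr (1 / real e) - 1) / (2 * real p powr (1 / real e) * sqrt (real p ^ f))
              * L1 av a) \<le> L_D p e f \<pi> S a
       \<and> L_D p e f \<pi> S a \<le> ereal (sqrt ((real p ^ f - 1) / real p ^ f) * L1 av a)"
proof -
  interpret padic p e f av \<pi> S using assms(1-3) by unfold_locales
  note l = assms(4)
  have up: "L_D p e f \<pi> S a \<le> ereal (sqrt ((real p ^ f - 1) / real p ^ f) * L1 av a)"
    unfolding L_D_def
  proof (rule Sup_least)
    fix z assume "z \<in> {ereal (
        sqrt ((hnorm p f \<pi> S (vdiff (Dop p e f \<pi> S (rho a \<phi>2)) (rho a (Dop p e f \<pi> S \<phi>2))))\<^sup>2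
            + (hnorm p f \<pi> S (vdiff (Dstar p e f \<pi> S (rho a \<phi>1)) (rho a (Dstar p e f \<pi> S \<phi>1))))\<^sup>2)
        / sqrt ((hnorm p f \<pi> S \<phi>1)\<^sup>2 + (hnorm p f \<pi> S \<phi>2)\<^sup>2)) | \<phi>1 \<phi>2.
      \<phi>1 \<in> domDstar p e f \<pi> S \<and> \<phi>2 \<in> domD p e f \<pi> S \<and>
      rho a \<phi>1 \<in> domDstar p e f \<pi> S \<and> rho a \<phi>2 \<in> domD p e f \<pi> S \<and>
      (hnorm p f \<pi> S \<phi>1)\<^sup>2 + (hnorm p f \<pi> S \<phi>2)\<^sup>2 > 0}"
    then obtain \<phi>1 \<phi>2 where z: "z = ereal (
        sqrt ((hnorm p f \<pi> S (vdiff (Dop p e f \<pi> S (rho a \<phi>2)) (rho a (Dop p e f \<pi> S \<phi>2))))\<^sup>2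
            + (hnorm p f \<pi> S (vdiff (Dstar p e f \<pi> S (rho a \<phi>1)) (rho a (Dstar p e f \<pi> S \<phi>1))))\<^sup>2)
        / sqrt ((hnorm p f \<pi> S \<phi>1)\<^sup>2 + (hnorm p f \<pi> S \<phi>2)\<^sup>2))"
      and h: "\<phi>1 \<in> domDstar p e f \<pi> S" "\<phi>2 \<in> domD p e f \<pi> S"
      "rho a \<phi>1 \<in> domDstar p e f \<pi> S" "rho a \<phi>2 \<in> domD p e f \<pi> S"
      "(hnorm p f \<pi> S \<phi>1)\<^sup>2 + (hnorm p f \<pi> S \<phi>2)\<^sup>2 > 0" by blast
    show "z \<le> ereal (sqrt ((real p ^ f - 1) / real p ^ f) * L1 av a)"
      unfolding z ereal_less_eq(3) by (rule upper_elem[OF l h(1) h(2) h(3) h(5)])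
  qed
  have lo: "ereal ((real p powr (1 / real e) - 1) / (2 * real p powr (1 / real e) * sqrt (real p ^ f))
              * L1 av a) \<le> L_D p e f \<pi> S a"
  proof (cases "L_D p e f \<pi> S a")
    case PInf then show ?thesis by simp
  next
    case MInf
    have "(0::'a) \<in> X 0" by (simp add: X0)
    from delta_elem[OF l this S0] MInf show ?thesis by simp
  next
    case (real M)
    have dle: "cmod (a x - a (x + s * \<pi> ^ n)) / (q ^ n * sqrt P) \<le> M" if "x \<in> X n" "s \<in> S" for x s n
      using delta_elem[OF l that] real by simp
    have M0: "M \<ge> 0"
    proof -
      have x0: "(0::'a) \<in> X 0" by (simp add: X0)
      have d: "cmod (a 0 - a (0 + 0 * \<pi> ^ 0)) / (q ^ 0 * sqrt P) \<le> M" by (rule dle[OF x0 S0])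
      have "0 \<le> cmod (a 0 - a (0 + 0 * \<pi> ^ 0)) / (q ^ 0 * sqrt P)"
        using P_gt1 by (intro divide_nonneg_nonneg) auto
      then show ?thesis using d by linarith
    qed
    have hyp: "cmod (a x - a (x + s * \<pi> ^ n)) \<le> (M * sqrt P) * q ^ n" if "x \<in> X n" "s \<in> S" for x s n
    proof -
      have pos: "q ^ n * sqrt P > 0" using q_pos P_gt1 p_pos by (intro mult_pos_pos zero_less_power real_sqrt_gt_zero) auto
      have "cmod (a x - a (x + s * \<pi> ^ n)) \<le> M * (q ^ n * sqrt P)"
        using dle[OF that] pos by (simp add: divide_le_eq)
      then show ?thesis by (simp add: algebra_simps)
    qed
    have C0: "M * sqrt P \<ge> 0" using M0 P_gt1 by simp
    have L1le: "L1 av a \<le> 2 * (M * sqrt P) / (1 - q)" by (rule lower_main[OF l C0 hyp])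
    have sP: "sqrt P > 0" using p_pos by simp
    have c_eq: "(real p powr (1 / real e) - 1) / (2 * real p powr (1 / real e) * sqrt P) = (1 - q) / (2 * sqrt P)"
      unfolding ppow using q_pos sP by (simp add: field_simps)
    have "(1 - q) / (2 * sqrt P) * L1 av a \<le> (1 - q) / (2 * sqrt P) * (2 * (M * sqrt P) / (1 - q))"
      using L1le q_lt1 P_gt1 by (intro mult_left_mono) auto
    also have "\<dots> = M" using q_lt1 sP by (simp add: field_simps)
    finally show ?thesis unfolding c_eq real by simp
  qed
  show ?thesis using up lo by blast
qed

end
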